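(* Let $\boldsymbol\Phi$ be the symmetric adjacency matrix of a connected undirected graph $G=(V,\mathcal E)$ on $n$ nodes with nonnegative edge weights and no self-loops, with degree matrix $\mathbf D$ and Laplacian $\mathbf L=\mathbf D-\boldsymbol\Phi$. Consider the natural random walk on $G$, i.e. the Markov chain with transition matrix $\mathbf P=\mathbf D^{-1}\boldsymbol\Phi$. Then there exists an oriented edge-incidence matrix $\mathbf F$ of $G$ such that for every edge $(j,k)\in\mathcal E$, $$\mathbf F^\dagger_{\mathcal E(j,k)\cdot}=\sqrt{\Phi_{jk}}\,(\mathbf L^\dagger_{\cdot j}-\mathbf L^\dagger_{\cdot k})=\frac{\sqrt{\Phi_{jk}}}{2\operatorname{vol}(G)}\Big(\mathbf I_n-\frac{\mathbf 1_n\mathbf 1_n^\top}{n}\Big)(\mathbf C_{\cdot k}-\mathbf C_{\cdot j}),$$ where $\operatorname{vol}(G)=\operatorname{trace}(\mathbf D)$ and $\mathbf C\in\mathbb R^{n\times n}_{\ge0}$ is the matrix of commute times, $C_{ij}=H_{ij}+H_{ji}$, with $H_{ij}$ the expected time for the random walk started at node $i$ to reach node $j$.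
   Context: An oriented edge-incidence matrix $\mathbf F\in\mathbb R^{n\times|\mathcal E|}$ has, for each edge between nodes $j$ and $k$ with column index $\mathcal E(j,k)$, exactly two nonzero entries $\mathbf F_{j,\mathcal E(j,k)}=-\mathbf F_{k,\mathcal E(j,k)}=\sqrt{\Phi_{jk}}$. $\mathbf F^\dagger$ and $\mathbf L^\dagger$ denote Moore–Penrose pseudoinverses; $\mathbf F^\dagger_{\mathcal E(j,k)\cdot}$ is the row of $\mathbf F^\dagger\in\mathbb R^{|\mathcal E|\times n}$ indexed by edge $\mathcal E(j,k)$, viewed as a vector in $\mathbb R^n$. $D_{ii}=\sum_j\Phi_{ij}$. *)

theory Defs
  imports "HOL-Analysis.Analysis"
begin

definition is_pinv :: "real^'c^'r \<Rightarrow> real^'r^'c \<Rightarrow> bool" where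
  "is_pinv A X \<longleftrightarrow> A ** X ** A = A \<and> X ** A ** X = X \<and>
     transpose (A ** X) = A ** X \<and> transpose (X ** A) = X ** A"

definition pinv :: "real^'c^'r \<Rightarrow> real^'r^'c" where
  "pinv A = (THE X. is_pinv A X)"

text \<open>Weighted graph given by a symmetric nonnegative adjacency matrix without self-loops;
  j and k are adjacent iff the weight is positive.\<close>
definition weighted_graph :: "real^'n^'n \<Rightarrow> bool" where
  "weighted_graph Phi \<longleftrightarrow> transpose Phi = Phi \<and> (\<forall>i j. Phi$i$j \<ge> 0) \<and> (\<forall>i. Phi$i$i = 0)"

definition connected_graph :: "real^'n^'n \<Rightarrow> bool" where
  "connected_graph Phi \<longleftrightarrow> (\<forall>j k. (j, k) \<in> {(a, b). Phi$a$b > 0}\<^sup>*)"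

definition degree_matrix :: "real^'n^'n \<Rightarrow> real^'n^'n" where
  "degree_matrix Phi = (\<chi> i j. if i = j then (\<Sum>l\<in>UNIV. Phi$i$l) else 0)"

definition laplacian :: "real^'n^'n \<Rightarrow> real^'n^'n" where
  "laplacian Phi = degree_matrix Phi - Phi"

definition vol :: "real^'n^'n \<Rightarrow> real" where
  "vol Phi = trace (degree_matrix Phi)"

definition transition_matrix :: "real^'n^'n \<Rightarrow> real^'n^'n" where
  "transition_matrix Phi = matrix_inv (degree_matrix Phi) ** Phi"

text \<open>Probability that the chain with transition matrix P started at i first hits j
  exactly at time t (sum over trajectories x_0 = i, ..., x_t = j avoiding j before t).\<close>
definition first_hit_prob :: "real^'n^'n \<Rightarrow> 'n \<Rightarrow> 'n \<Rightarrow> nat \<Rightarrow> real" where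
  "first_hit_prob P i j t =
     (\<Sum>xs\<in>{xs::'n list. length xs = Suc t \<and> xs ! 0 = i \<and> xs ! t = j \<and> (\<forall>s<t. xs ! s \<noteq> j)}.
        \<Prod>s<t. P $ (xs ! s) $ (xs ! Suc s))"

definition hitting_time :: "real^'n^'n \<Rightarrow> 'n \<Rightarrow> 'n \<Rightarrow> real" where
  "hitting_time P i j = (\<Sum>t. real t * first_hit_prob P i j t)"

definition commute_time_matrix :: "real^'n^'n \<Rightarrow> real^'n^'n" where
  "commute_time_matrix Phi =
     (let P = transition_matrix Phi in (\<chi> i j. hitting_time P i j + hitting_time P j i))"

text \<open>An enumeration of the edges by the index type 'e, each undirected edge
  {j,k} appearing exactly once, with a chosen orientation (j,k).\<close>
definition edge_orientation :: "real^'n^'n \<Rightarrow> ('e \<Rightarrow> 'n \<times> 'n) \<Rightarrow> bool" where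
  "edge_orientation Phi \<epsilon> \<longleftrightarrow> inj \<epsilon> \<and>
     (\<forall>e. Phi $ fst (\<epsilon> e) $ snd (\<epsilon> e) > 0) \<and>
     (\<forall>j k. Phi$j$k > 0 \<longrightarrow> (j, k) \<in> range \<epsilon> \<or> (k, j) \<in> range \<epsilon>) \<and>
     (\<forall>j k. (j, k) \<in> range \<epsilon> \<longrightarrow> (k, j) \<notin> range \<epsilon>)"

definition incidence_matrix :: "real^'n^'n \<Rightarrow> ('e \<Rightarrow> 'n \<times> 'n) \<Rightarrow> real^'e^'n" where
  "incidence_matrix Phi \<epsilon> = (\<chi> i e. (case \<epsilon> e of (j, k) \<Rightarrow>
      if i = j then sqrt (Phi$j$k) else if i = k then - sqrt (Phi$j$k) else 0))"

end

theory Submission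
  imports Defs
begin
lemma pinv_unique:
  assumes "is_pinv A X" "is_pinv A Y" shows "X = Y"
proof -
  have a: "A ** X ** A = A" "X ** A ** X = X" "transpose (A ** X) = A ** X" "transpose (X ** A) = X ** A"
    using assms(1) unfolding is_pinv_def by auto
  have b: "A ** Y ** A = A" "Y ** A ** Y = Y" "transpose (A ** Y) = A ** Y" "transpose (Y ** A) = Y ** A"
    using assms(2) unfolding is_pinv_def by auto
  have "X = X ** (A ** X)" using a(2) by (simp add: matrix_mul_assoc)
  also have "\<dots> = X ** transpose (A ** X)" using a(3) by simp
  also have "\<dots> = X ** transpose X ** transpose A" by (simp add: matrix_transpose_mul matrix_mul_assoc)
  also have "\<dots> = X ** transpose X ** transpose (A ** Y ** A)" using b(1) by simp
  also have "\<dots> = X ** transpose (A ** X) ** transpose (A ** Y)" by (simp add: matrix_transpose_mul matrix_mul_assoc)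
  also have "\<dots> = X ** A ** X ** A ** Y" using a(3) b(3) by (simp add: matrix_mul_assoc)
  also have "\<dots> = X ** A ** Y" using a(2) by simp
  finally have X: "X = X ** A ** Y" .
  have "Y = (Y ** A) ** Y" using b(2) by (simp add: matrix_mul_assoc)
  also have "\<dots> = transpose (Y ** A) ** Y" using b(4) by simp
  also have "\<dots> = transpose A ** transpose Y ** Y" by (simp add: matrix_transpose_mul matrix_mul_assoc)
  also have "\<dots> = transpose (A ** X ** A) ** transpose Y ** Y" using a(1) by simp
  also have "\<dots> = transpose (X ** A) ** transpose (Y ** A) ** Y" by (simp add: matrix_transpose_mul matrix_mul_assoc)
  also have "\<dots> = X ** A ** (Y ** A ** Y)" using a(4) b(4) by (simp add: matrix_mul_assoc)
  also have "\<dots> = X ** A ** Y" using b(2) by simp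
  finally show ?thesis using X by simp
qed

lemma pinv_eq: "is_pinv A X \<Longrightarrow> pinv A = X"
  unfolding pinv_def by (metis pinv_unique the_equality)

lemma mm_diff_l: "(A::real^'m^'n) ** (B - C) = A ** B - A ** C"
  by (simp add: matrix_matrix_mult_def vec_eq_iff sum_subtractf algebra_simps)
lemma mm_diff_r: "((B::real^'m^'n) - C) ** A = B ** A - C ** A"
  by (simp add: matrix_matrix_mult_def vec_eq_iff sum_subtractf algebra_simps)
lemma mm_add_r: "((B::real^'m^'n) + C) ** A = B ** A + C ** A"
  by (simp add: matrix_matrix_mult_def vec_eq_iff sum.distrib algebra_simps)
lemma transpose_diff: "transpose ((A::real^'m^'n) - B) = transpose A - transpose B"
  by (simp add: transpose_def vec_eq_iff)
lemma transpose_add: "transpose ((A::real^'m^'n) + B) = transpose A + transpose B"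
  by (simp add: transpose_def vec_eq_iff)

lemma matrix_inv_eqI:
  fixes A B :: "real^'n^'n"
  assumes "A ** B = mat 1" "B ** A = mat 1"
  shows "matrix_inv A = B"
proof -
  have "\<exists>B'. A ** B' = mat 1 \<and> B' ** A = mat 1" using assms by blast
  then have *: "A ** matrix_inv A = mat 1 \<and> matrix_inv A ** A = mat 1"
    unfolding matrix_inv_def by (rule someI_ex)
  have "matrix_inv A = (matrix_inv A ** A) ** B" using assms(1) by (simp add: matrix_mul_assoc[symmetric])
  also have "\<dots> = B" using * by simp
  finally show ?thesis .
qed

definition deg :: "real^'n^'n \<Rightarrow> 'n \<Rightarrow> real" where "deg Phi i = (\<Sum>l\<in>UNIV. Phi$i$l)"
definition Jn :: "real^'n^'n" where "Jn = (\<chi> a b. 1 / real CARD('n))"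
definition Gm :: "real^'n^'n \<Rightarrow> real^'n^'n" where
  "Gm Phi = matrix_inv (laplacian Phi + Jn) - Jn"

lemma Jn_Jn: "Jn ** (Jn :: real^'n^'n) = Jn"
  by (simp add: Jn_def matrix_matrix_mult_def vec_eq_iff power2_eq_square)

lemma Jn_vec: "((Jn::real^'n^'n) *v x) $ i = (\<Sum>l\<in>UNIV. x$l) / real CARD('n)"
  by (simp add: Jn_def matrix_vector_mult_def sum_divide_distrib)

lemma transpose_Jn: "transpose (Jn::real^'n^'n) = Jn"
  by (simp add: Jn_def transpose_def vec_eq_iff)

locale wgraph =
  fixes Phi :: "real^'n^'n"
  assumes wg: "weighted_graph Phi" and cg: "connected_graph Phi" and nontriv: "\<exists>a b::'n. a \<noteq> b"
begin

lemma sym: "Phi$a$b = Phi$b$a"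
  using wg unfolding weighted_graph_def transpose_def vec_eq_iff by auto
lemma nonneg: "Phi$a$b \<ge> 0"
  using wg unfolding weighted_graph_def by auto
lemma diag0: "Phi$a$a = 0"
  using wg unfolding weighted_graph_def by auto

lemma lap: "laplacian Phi $a$b = (if a = b then deg Phi a else 0) - Phi$a$b"
  by (simp add: laplacian_def degree_matrix_def deg_def)

lemma deg_pos: "deg Phi i > 0"
proof -
  obtain k where "k \<noteq> i" using nontriv by metis
  have "(i, k) \<in> {(a, b). Phi$a$b > 0}\<^sup>*" using cg unfolding connected_graph_def by blast
  then obtain y where "(i, y) \<in> {(a, b). Phi$a$b > 0}"
    using \<open>k \<noteq> i\<close> by (cases rule: converse_rtranclE) auto
  then have "Phi$i$y > 0" by simp
  have "Phi$i$y \<le> deg Phi i" unfolding deg_def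
    by (rule member_le_sum) (auto simp: nonneg)
  then show ?thesis using \<open>Phi$i$y > 0\<close> by linarith
qed

lemma lap_mult: "(laplacian Phi *v x)$y = (\<Sum>l\<in>UNIV. Phi$y$l * (x$y - x$l))"
proof -
  have "(laplacian Phi *v x)$y = (\<Sum>l\<in>UNIV. laplacian Phi $y$l * x$l)"
    by (simp add: matrix_vector_mult_def)
  also have "\<dots> = (\<Sum>l\<in>UNIV. (if y = l then deg Phi y * x$l else 0) - Phi$y$l * x$l)"
    by (intro sum.cong) (auto simp: lap algebra_simps)
  also have "\<dots> = (\<Sum>l\<in>UNIV. (if y = l then deg Phi y * x$l else 0)) - (\<Sum>l\<in>UNIV. Phi$y$l * x$l)"
    by (simp add: sum_subtractf)
  also have "\<dots> = deg Phi y * x$y - (\<Sum>l\<in>UNIV. Phi$y$l * x$l)" by simp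
  also have "\<dots> = (\<Sum>l\<in>UNIV. Phi$y$l * (x$y - x$l))"
    by (simp add: deg_def sum_distrib_left sum_subtractf algebra_simps)
  finally show ?thesis .
qed

lemma lap_row_sum: "(\<Sum>l\<in>UNIV. laplacian Phi $a$l) = 0"
  by (simp add: lap sum_subtractf deg_def)

lemma lap_col_sum: "(\<Sum>l\<in>UNIV. laplacian Phi $l$a) = 0"
proof -
  have "(\<Sum>l\<in>UNIV. Phi$l$a) = (\<Sum>l\<in>UNIV. Phi$a$l)" using sym by simp
  then show ?thesis by (simp add: lap sum_subtractf deg_def)
qed

lemma lap_sym: "transpose (laplacian Phi) = laplacian Phi"
proof -
  have "laplacian Phi $ b $ a = laplacian Phi $ a $ b" for a b
    by (simp add: lap sym[of a b])
  then show ?thesis by (simp add: transpose_def vec_eq_iff)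
qed

lemma lap_ker:
  assumes "laplacian Phi *v x = 0"
  shows "x$a = x$b"
proof -
  define m where "m = Max (range (\<lambda>l. x$l))"
  have "m \<in> range (\<lambda>l. x$l)" unfolding m_def by (rule Max_in) auto
  then obtain i where i: "x$i = m" by auto
  have le: "x$l \<le> m" for l unfolding m_def by (rule Max_ge) auto
  have "x$k = m" if "(i, k) \<in> {(a, b). Phi$a$b > 0}\<^sup>*" for k
    using that
  proof (induction rule: rtrancl_induct)
    case base then show ?case using i by simp
  next
    case (step y z)
    have "(\<Sum>l\<in>UNIV. Phi$y$l * (x$y - x$l)) = 0"
      using assms lap_mult[of x y] by simp
    moreover have "\<forall>l\<in>UNIV. Phi$y$l * (x$y - x$l) \<ge> 0"
      using step.IH le nonneg by simp
    ultimately have "Phi$y$z * (x$y - x$z) = 0"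
      using sum_nonneg_eq_0_iff[of UNIV "\<lambda>l. Phi$y$l * (x$y - x$l)"] by simp
    then show ?case using step by auto
  qed
  then show ?thesis using cg unfolding connected_graph_def by metis
qed

definition M where "M = laplacian Phi + Jn"

lemma lap_Jn: "laplacian Phi ** Jn = 0"
  by (simp add: Jn_def matrix_matrix_mult_def vec_eq_iff sum_divide_distrib[symmetric] lap_row_sum)
lemma Jn_lap: "Jn ** laplacian Phi = 0"
  by (simp add: Jn_def matrix_matrix_mult_def vec_eq_iff sum_divide_distrib[symmetric] lap_col_sum)

lemma M_inj: assumes "M *v x = 0" shows "x = 0"
proof -
  have s: "(\<Sum>i\<in>UNIV. (laplacian Phi *v x)$i) = 0"
    by (simp add: matrix_vector_mult_def sum.swap[of _ UNIV UNIV] sum_distrib_right[symmetric] lap_col_sum)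
  have "(\<Sum>i\<in>UNIV. (M *v x)$i) = (\<Sum>i\<in>UNIV. (laplacian Phi *v x)$i) + (\<Sum>i\<in>UNIV. (Jn *v x)$i)"
    by (simp add: M_def matrix_vector_mult_add_rdistrib sum.distrib)
  also have "\<dots> = (\<Sum>l\<in>UNIV. x$l)" using s by (simp add: Jn_vec)
  finally have sx: "(\<Sum>l\<in>UNIV. x$l) = 0" using assms by simp
  then have "Jn *v x = 0" by (simp add: vec_eq_iff Jn_vec)
  then have "laplacian Phi *v x = 0" using assms by (simp add: M_def matrix_vector_mult_add_rdistrib)
  then have c: "x$l = x$a" for l a using lap_ker by blast
  fix a
  have "(\<Sum>l\<in>UNIV. x$l) = (\<Sum>l::'n\<in>UNIV. x$a)" by (rule sum.cong[OF refl]) (rule c)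
  then have "(\<Sum>l\<in>UNIV. x$l) = real CARD('n) * x$a" by simp
  then have "x$a = 0" using sx by simp
  then show ?thesis using c[of _ a] by (simp add: vec_eq_iff)
qed

definition Mi where "Mi = matrix_inv M"

lemma Mi: "M ** Mi = mat 1" "Mi ** M = mat 1"
proof -
  obtain B where B: "B ** M = mat 1" using M_inj matrix_left_invertible_ker by blast
  then have "M ** B = mat 1" using matrix_left_right_inverse by blast
  then have "Mi = B" unfolding Mi_def using B by (rule matrix_inv_eqI)
  then show "M ** Mi = mat 1" "Mi ** M = mat 1" using B \<open>M ** B = mat 1\<close> by auto
qed

lemma M_sym: "transpose M = M"
  by (simp add: M_def transpose_add lap_sym transpose_Jn)

lemma Mi_sym: "transpose Mi = Mi"
proof -
  have "transpose Mi ** M = mat 1"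
    using arg_cong[OF Mi(1), of transpose] by (simp add: matrix_transpose_mul M_sym)
  have "transpose Mi = transpose Mi ** (M ** Mi)" by (simp add: Mi)
  also have "\<dots> = (transpose Mi ** M) ** Mi" by (simp add: matrix_mul_assoc)
  also have "\<dots> = Mi" using \<open>transpose Mi ** M = mat 1\<close> by simp
  finally show ?thesis .
qed

lemma M_Jn: "M ** Jn = Jn" by (simp add: M_def mm_add_r lap_Jn Jn_Jn)
lemma Jn_M: "Jn ** M = Jn" by (simp add: M_def matrix_add_ldistrib Jn_lap Jn_Jn)
lemma Mi_Jn: "Mi ** Jn = Jn"
  by (metis M_Jn Mi(2) matrix_mul_assoc matrix_mul_lid)
lemma Jn_Mi: "Jn ** Mi = Jn"
  by (metis Jn_M Mi(1) matrix_mul_assoc matrix_mul_rid)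

definition G where "G = Gm Phi"
lemma G_def': "G = Mi - Jn" unfolding G_def Gm_def Mi_def M_def by simp
lemma L_def': "laplacian Phi = M - Jn" unfolding M_def by simp

lemma LG: "laplacian Phi ** G = mat 1 - Jn"
  by (simp add: L_def' G_def' mm_diff_l mm_diff_r Mi M_Jn Jn_Mi Jn_Jn)
lemma GL: "G ** laplacian Phi = mat 1 - Jn"
  by (simp add: L_def' G_def' mm_diff_l mm_diff_r Mi Mi_Jn Jn_M Jn_Jn)
lemma G_Jn: "G ** Jn = 0" by (simp add: G_def' mm_diff_r Mi_Jn Jn_Jn)
lemma Jn_G: "Jn ** G = 0" by (simp add: G_def' mm_diff_l Jn_Mi Jn_Jn)
lemma G_sym: "transpose G = G" by (simp add: G_def' transpose_diff Mi_sym transpose_Jn)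

lemma pinv_L: "is_pinv (laplacian Phi) G"
  unfolding is_pinv_def
  by (simp add: LG GL mm_diff_r Jn_lap Jn_G transpose_diff transpose_Jn flip: matrix_mul_assoc)

lemma G_sym': "G$a$b = G$b$a"
  using G_sym by (metis transpose_def vec_lambda_beta)

lemma G_col_sum: "(\<Sum>l\<in>UNIV. G$l$a) = 0"
proof -
  have "(Jn ** G)$a$a = 0" using Jn_G by simp
  then show ?thesis by (simp add: Jn_def matrix_matrix_mult_def sum_divide_distrib[symmetric])
qed

end

lemma fh_0: fixes P :: "real^'n^'n" shows "first_hit_prob P i j 0 = (if i = j then 1 else 0)"
proof -
  have "{xs::'n list. length xs = Suc 0 \<and> xs ! 0 = i \<and> xs ! 0 = j \<and> (\<forall>s<0. xs ! s \<noteq> j)}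
        = (if i = j then {[i]} else {})"
    by (auto simp: length_Suc_conv)
  then show ?thesis unfolding first_hit_prob_def by simp
qed

lemma fh_Suc: fixes P :: "real^'n^'n" shows
  "first_hit_prob P i j (Suc t) = (if i = j then 0 else (\<Sum>l\<in>UNIV. P$i$l * first_hit_prob P l j t))"
proof (cases "i = j")
  case True
  have "{xs::'n list. length xs = Suc (Suc t) \<and> xs ! 0 = i \<and> xs ! Suc t = j \<and> (\<forall>s<Suc t. xs ! s \<noteq> j)} = {}"
    using True by auto
  then show ?thesis unfolding first_hit_prob_def using True by (simp only: sum.empty) simp
next
  case False
  define A where "A = {xs::'n list. length xs = Suc (Suc t) \<and> xs ! 0 = i \<and> xs ! Suc t = j \<and> (\<forall>s<Suc t. xs ! s \<noteq> j)}"
  define B where "B l = {ys::'n list. length ys = Suc t \<and> ys ! 0 = l \<and> ys ! t = j \<and> (\<forall>s<t. ys ! s \<noteq> j)}" for l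
  define h where "h = (\<lambda>(l::'n, ys::'n list). i # ys)"
  have finB: "finite (B l)" for l
  proof (rule finite_subset)
    show "B l \<subseteq> {xs. set xs \<subseteq> UNIV \<and> length xs = Suc t}" unfolding B_def by auto
    show "finite {xs::'n list. set xs \<subseteq> UNIV \<and> length xs = Suc t}" by (rule finite_lists_length_eq) simp
  qed
  have inj: "inj_on h (SIGMA l:UNIV. B l)"
    unfolding inj_on_def h_def B_def by auto
  have img: "A = h ` (SIGMA l:UNIV. B l)"
  proof
    show "A \<subseteq> h ` (SIGMA l:UNIV. B l)"
    proof
      fix xs assume "xs \<in> A"
      then obtain a ys where xs: "xs = a # ys" and len: "length ys = Suc t"
        unfolding A_def by (auto simp: length_Suc_conv)
      have "a = i" using \<open>xs \<in> A\<close> xs unfolding A_def by auto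
      have "ys \<in> B (ys ! 0)" using \<open>xs \<in> A\<close> xs len unfolding A_def B_def by auto
      then show "xs \<in> h ` (SIGMA l:UNIV. B l)" unfolding h_def using xs \<open>a = i\<close>
        by (auto intro!: image_eqI[where x="(ys ! 0, ys)"])
    qed
  next
    show "h ` (SIGMA l:UNIV. B l) \<subseteq> A"
    proof
      fix xs assume "xs \<in> h ` (SIGMA l:UNIV. B l)"
      then obtain l ys where "ys \<in> B l" "xs = i # ys" unfolding h_def by auto
      moreover have "\<forall>s<Suc t. (i # ys) ! s \<noteq> j"
      proof (intro allI impI)
        fix s assume "s < Suc t"
        show "(i # ys) ! s \<noteq> j"
          using \<open>ys \<in> B l\<close> False \<open>s < Suc t\<close> unfolding B_def by (cases s) auto
      qed
      ultimately show "xs \<in> A" unfolding A_def B_def by auto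
    qed
  qed
  define f where "f xs = (\<Prod>s<Suc t. P $ (xs ! s) $ (xs ! Suc s))" for xs
  have "first_hit_prob P i j (Suc t) = sum f A"
    unfolding first_hit_prob_def A_def f_def by simp
  also have "\<dots> = sum (f \<circ> h) (SIGMA l:UNIV. B l)"
    unfolding img by (rule sum.reindex[OF inj])
  also have "\<dots> = (\<Sum>(l,ys)\<in>(SIGMA l:UNIV. B l). f (i # ys))"
    by (intro sum.cong) (auto simp: h_def)
  also have "\<dots> = (\<Sum>l\<in>UNIV. \<Sum>ys\<in>B l. f (i # ys))"
    by (rule sum.Sigma[symmetric]) (auto simp: finB)
  also have "\<dots> = (\<Sum>l\<in>UNIV. \<Sum>ys\<in>B l. P$i$l * (\<Prod>s<t. P $ (ys ! s) $ (ys ! Suc s)))"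
  proof (intro sum.cong refl)
    fix l ys assume "ys \<in> B l"
    then have "ys ! 0 = l" unfolding B_def by auto
    then show "f (i # ys) = P$i$l * (\<Prod>s<t. P $ (ys ! s) $ (ys ! Suc s))"
      unfolding f_def by (simp only: prod.lessThan_Suc_shift) simp
  qed
  also have "\<dots> = (\<Sum>l\<in>UNIV. P$i$l * first_hit_prob P l j t)"
    unfolding first_hit_prob_def B_def by (simp add: sum_distrib_left)
  finally show ?thesis using False by simp
qed

context wgraph begin

definition p where "p i l = Phi$i$l / deg Phi i"

lemma P_entry: "transition_matrix Phi $ i $ l = p i l"
proof -
  define Dinv :: "real^'n^'n" where "Dinv = (\<chi> i l. if i = l then 1 / deg Phi i else 0)"
  have D: "degree_matrix Phi = (\<chi> i l. if i = l then deg Phi i else 0)"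
    by (simp add: degree_matrix_def deg_def vec_eq_iff)
  have 1: "degree_matrix Phi ** Dinv = mat 1"
    unfolding D Dinv_def matrix_matrix_mult_def mat_def
    by (simp add: vec_eq_iff if_distrib[of "\<lambda>x. x * _"] deg_pos[THEN less_imp_neq, symmetric] cong: if_cong)
  have 2: "Dinv ** degree_matrix Phi = mat 1"
    unfolding D Dinv_def matrix_matrix_mult_def mat_def
    by (simp add: vec_eq_iff if_distrib[of "\<lambda>x. x * _"] deg_pos[THEN less_imp_neq, symmetric] cong: if_cong)
  have "matrix_inv (degree_matrix Phi) = Dinv" by (rule matrix_inv_eqI[OF 1 2])
  then show ?thesis
    unfolding transition_matrix_def p_def
    by (simp add: Dinv_def matrix_matrix_mult_def if_distrib[of "\<lambda>x. x * _"] cong: if_cong)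
qed

lemma p_nonneg: "p i l \<ge> 0"
  unfolding p_def by (rule divide_nonneg_pos[OF nonneg deg_pos])

lemma p_rowsum: "(\<Sum>l\<in>UNIV. p i l) = 1"
  unfolding p_def using deg_pos[of i] by (simp add: sum_divide_distrib[symmetric] deg_def[symmetric])

lemma p_pos_iff: "p i l > 0 \<longleftrightarrow> Phi$i$l > 0"
  unfolding p_def using deg_pos[of i] by (simp add: divide_pos_pos zero_less_divide_iff)

definition Top :: "'n \<Rightarrow> ('n \<Rightarrow> real) \<Rightarrow> 'n \<Rightarrow> real" where
  "Top j v i = (if i = j then 0 else (\<Sum>l\<in>UNIV. p i l * v l))"

definition uu :: "'n \<Rightarrow> nat \<Rightarrow> 'n \<Rightarrow> real" where
  "uu j t = (Top j ^^ t) (\<lambda>i. if i = j then 0 else 1)"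

lemma uu_0: "uu j 0 i = (if i = j then 0 else 1)" by (simp add: uu_def)
lemma uu_Suc: "uu j (Suc t) = Top j (uu j t)" by (simp add: uu_def)

lemma Top_j: "Top j v j = 0" by (simp add: Top_def)
lemma Top_mono: "(\<And>l. v l \<le> w l) \<Longrightarrow> Top j v i \<le> Top j w i"
  unfolding Top_def by (auto intro!: sum_mono mult_left_mono p_nonneg)
lemma Top_nonneg: "(\<And>l. 0 \<le> v l) \<Longrightarrow> 0 \<le> Top j v i"
  unfolding Top_def by (auto intro!: sum_nonneg mult_nonneg_nonneg p_nonneg)
lemma Top_scale: "Top j (\<lambda>l. c * v l) i = c * Top j v i"
  unfolding Top_def by (simp add: sum_distrib_left algebra_simps)
lemma Top_diff: "Top j (\<lambda>l. v l - w l) i = Top j v i - Top j w i"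
  unfolding Top_def by (simp add: sum_subtractf algebra_simps)
lemma Top_abs: "\<bar>Top j v i\<bar> \<le> Top j (\<lambda>l. \<bar>v l\<bar>) i"
proof (cases "i = j")
  case False
  have "\<bar>\<Sum>l\<in>UNIV. p i l * v l\<bar> \<le> (\<Sum>l\<in>UNIV. \<bar>p i l * v l\<bar>)" by (rule sum_abs)
  also have "\<dots> = (\<Sum>l\<in>UNIV. p i l * \<bar>v l\<bar>)" by (simp add: abs_mult p_nonneg)
  finally show ?thesis using False by (simp add: Top_def)
qed (simp add: Top_def)
lemma Top_le1: "(\<And>l. v l \<le> 1) \<Longrightarrow> Top j v i \<le> 1"
proof -
  assume "\<And>l. v l \<le> 1"
  then have "Top j v i \<le> Top j (\<lambda>_. 1) i" by (rule Top_mono)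
  also have "\<dots> \<le> 1" by (simp add: Top_def p_rowsum)
  finally show ?thesis .
qed

lemma uu_j: "uu j t j = 0"
  by (cases t) (simp_all add: uu_0 uu_Suc Top_j)
lemma uu_nonneg: "0 \<le> uu j t i"
  by (induction t arbitrary: i) (auto simp: uu_0 uu_Suc intro: Top_nonneg)
lemma uu_le1: "uu j t i \<le> 1"
  by (induction t arbitrary: i) (auto simp: uu_0 uu_Suc intro: Top_le1)
lemma uu_dec: "uu j (Suc t) i \<le> uu j t i"
proof (induction t arbitrary: i)
  case 0
  show ?case using uu_le1[of j 1 i] uu_j[of j 1] by (cases "i = j") (auto simp: uu_0)
next
  case (Suc t)
  show ?case unfolding uu_Suc[of j "Suc t"] uu_Suc[of j t] by (rule Top_mono) (use Suc in \<open>simp add: uu_Suc\<close>)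
qed
lemma uu_antimono: "t \<le> t' \<Longrightarrow> uu j t' i \<le> uu j t i"
  using lift_Suc_antimono_le[of "\<lambda>t. uu j t i"] uu_dec by blast

lemma fh_uu: "first_hit_prob (transition_matrix Phi) i j (Suc t) = uu j t i - uu j (Suc t) i"
proof (induction t arbitrary: i)
  case 0
  show ?case
  proof (cases "i = j")
    case True then show ?thesis by (simp add: fh_Suc uu_j)
  next
    case False
    have "(\<Sum>l\<in>UNIV. p i l * (if l = j then 0 else 1)) = (\<Sum>l\<in>UNIV. p i l - (if l = j then p i l else 0))"
      by (intro sum.cong) auto
    also have "\<dots> = 1 - p i j" by (simp add: sum_subtractf p_rowsum)
    finally show ?thesis using False
      by (simp add: fh_Suc fh_0 P_entry uu_0 uu_Suc Top_def if_distrib[of "\<lambda>x. _ * x"] cong: if_cong)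
  qed
next
  case (Suc t)
  have "first_hit_prob (transition_matrix Phi) i j (Suc (Suc t)) =
        (if i = j then 0 else (\<Sum>l\<in>UNIV. p i l * (uu j t l - uu j (Suc t) l)))"
    by (simp add: fh_Suc[of _ i j "Suc t"] Suc P_entry)
  also have "\<dots> = Top j (\<lambda>l. uu j t l - uu j (Suc t) l) i" by (simp add: Top_def)
  also have "\<dots> = uu j (Suc t) i - uu j (Suc (Suc t)) i"
    by (simp add: Top_diff uu_Suc[of j "Suc t"] uu_Suc[of j t])
  finally show ?case .
qed

lemma fh_nonneg: "first_hit_prob (transition_matrix Phi) i j t \<ge> 0"
  by (cases t) (simp_all add: fh_0 fh_uu uu_dec)

end

context wgraph begin

definition cmin where "cmin = Min (insert 1 {p a b |a b. p a b > 0})"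

lemma cmin: "0 < cmin" "cmin \<le> 1" "p a b > 0 \<Longrightarrow> cmin \<le> p a b"
proof -
  have fin: "finite (insert 1 {p a b |a b. p a b > 0})"
  proof -
    have "{p a b |a b. p a b > 0} \<subseteq> (\<lambda>(a,b). p a b) ` UNIV" by auto
    then show ?thesis by (simp add: finite_subset)
  qed
  show "0 < cmin" unfolding cmin_def using fin by (subst Min_gr_iff) auto
  show "cmin \<le> 1" unfolding cmin_def using fin by (intro Min_le) auto
  show "p a b > 0 \<Longrightarrow> cmin \<le> p a b" unfolding cmin_def using fin by (intro Min_le) auto
qed

lemma reach: "(y, j) \<in> {(a, b). Phi$a$b > 0}\<^sup>* \<Longrightarrow> \<exists>d. uu j d y \<le> 1 - cmin ^ d"
proof (induction rule: converse_rtrancl_induct)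
  case base
  show ?case by (rule exI[of _ 0]) (simp add: uu_0)
next
  case (step y z)
  then obtain d where d: "uu j d z \<le> 1 - cmin ^ d" by blast
  show ?case
  proof (cases "y = j")
    case True then show ?thesis by (intro exI[of _ 0]) (simp add: uu_0)
  next
    case False
    have pz: "p y z > 0" using step(1) p_pos_iff by auto
    have "uu j (Suc d) y = (\<Sum>l\<in>UNIV. p y l * uu j d l)" using False by (simp add: uu_Suc Top_def)
    also have "\<dots> \<le> (\<Sum>l\<in>UNIV. p y l * (1 - (if l = z then cmin ^ d else 0)))"
      by (intro sum_mono mult_left_mono p_nonneg) (use d uu_le1 in auto)
    also have "\<dots> = 1 - p y z * cmin ^ d"
      by (simp add: algebra_simps sum_subtractf p_rowsum if_distrib[of "\<lambda>x. _ * x"] cong: if_cong)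
    also have "\<dots> \<le> 1 - cmin * cmin ^ d"
      using cmin(3)[OF pz] cmin(1) by (simp add: mult_right_mono)
    finally show ?thesis by (intro exI[of _ "Suc d"]) simp
  qed
qed

definition dd where "dd j y = (SOME d. uu j d y \<le> 1 - cmin ^ d)"
definition NN where "NN j = Suc (Max (range (dd j)))"
definition del where "del j = cmin ^ NN j"

lemma del: "0 < del j" "del j \<le> 1"
  unfolding del_def using cmin(1,2) by (auto simp: power_le_one)

lemma uN: "uu j (NN j) y \<le> 1 - del j"
proof -
  have "(y, j) \<in> {(a, b). Phi$a$b > 0}\<^sup>*" using cg unfolding connected_graph_def by blast
  from reach[OF this] have d: "uu j (dd j y) y \<le> 1 - cmin ^ (dd j y)"
    unfolding dd_def by (rule someI_ex)
  have le: "dd j y \<le> NN j" unfolding NN_def by (simp add: le_SucI)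
  have "uu j (NN j) y \<le> uu j (dd j y) y" by (rule uu_antimono[OF le])
  also have "\<dots> \<le> 1 - cmin ^ (dd j y)" by (rule d)
  also have "\<dots> \<le> 1 - del j" unfolding del_def
    using power_decreasing[OF le, of cmin] cmin(1,2) by simp
  finally show ?thesis .
qed

lemma contract:
  assumes "\<And>l. \<bar>v l\<bar> \<le> B * uu j 0 l"
  shows "\<bar>(Top j ^^ t) v i\<bar> \<le> B * uu j t i"
proof (induction t arbitrary: i)
  case 0 then show ?case using assms by simp
next
  case (Suc t)
  have "\<bar>(Top j ^^ Suc t) v i\<bar> = \<bar>Top j ((Top j ^^ t) v) i\<bar>" by simp
  also have "\<dots> \<le> Top j (\<lambda>l. \<bar>(Top j ^^ t) v l\<bar>) i" by (rule Top_abs)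
  also have "\<dots> \<le> Top j (\<lambda>l. B * uu j t l) i" by (rule Top_mono) (rule Suc)
  also have "\<dots> = B * uu j (Suc t) i" by (simp add: Top_scale uu_Suc)
  finally show ?case .
qed

lemma uu_add: "uu j (n + t) i = (Top j ^^ n) (uu j t) i" by (simp add: uu_def funpow_add)

lemma uu_block:
  assumes "\<And>l. uu j t l \<le> B"
  shows "uu j (NN j + t) i \<le> B * (1 - del j)"
proof -
  have B: "B \<ge> 0" using assms[of j] uu_j[of j t] by simp
  have "\<bar>uu j t l\<bar> \<le> B * uu j 0 l" for l
    using assms[of l] uu_nonneg[of j t l] uu_j[of j t] by (cases "l = j") (auto simp: uu_0)
  then have "\<bar>(Top j ^^ NN j) (uu j t) i\<bar> \<le> B * uu j (NN j) i" by (rule contract)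
  also have "\<dots> \<le> B * (1 - del j)" using B uN by (simp add: mult_left_mono)
  finally show ?thesis by (simp add: uu_add)
qed

lemma uu_pow: "uu j (k * NN j) i \<le> (1 - del j) ^ k"
proof (induction k arbitrary: i)
  case 0 then show ?case using uu_le1 by simp
next
  case (Suc k)
  have "uu j (NN j + k * NN j) i \<le> (1 - del j) ^ k * (1 - del j)"
    by (rule uu_block) (rule Suc)
  then show ?case by (simp add: algebra_simps)
qed

lemma uu_bound: "uu j t i \<le> (1 - del j) ^ (t div NN j)"
proof -
  have "t div NN j * NN j \<le> t" by simp
  then have "uu j t i \<le> uu j (t div NN j * NN j) i" by (rule uu_antimono)
  also have "\<dots> \<le> (1 - del j) ^ (t div NN j)" by (rule uu_pow)
  finally show ?thesis .
qed

lemma sum_blocks: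
  fixes f :: "nat \<Rightarrow> real"
  assumes "N > 0"
  shows "(\<Sum>t<k * N. f (t div N)) = real N * (\<Sum>q<k. f q)"
proof (induction k)
  case 0 then show ?case by simp
next
  case (Suc k)
  have "(\<Sum>t<Suc k * N. f (t div N)) = (\<Sum>t<k * N. f (t div N)) + (\<Sum>t\<in>{k*N..<k*N+N}. f (t div N))"
    by (simp add: sum.atLeastLessThan_concat[symmetric] lessThan_atLeast0 add.commute)
  also have "(\<Sum>t\<in>{k*N..<k*N+N}. f (t div N)) = (\<Sum>t\<in>{k*N..<k*N+N}. f k)"
  proof (intro sum.cong refl)
    fix t assume "t \<in> {k*N..<k*N+N}"
    then have "t div N = k" using assms
      by (metis atLeastLessThan_iff div_nat_eqI mult.commute mult_Suc_right add.commute)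
    then show "f (t div N) = f k" by simp
  qed
  finally show ?case using Suc by (simp add: algebra_simps)
qed

lemma uu_summable: "summable (\<lambda>t. uu j t i)"
proof (rule summableI_nonneg_bounded)
  show "0 \<le> uu j t i" for t by (rule uu_nonneg)
  fix m
  define N where "N = NN j"
  define x where "x = 1 - del j"
  have N: "N > 0" unfolding N_def NN_def by simp
  have x: "0 \<le> x" "x < 1" unfolding x_def using del[of j] by auto
  have "(\<Sum>t<m. uu j t i) \<le> (\<Sum>t<m. x ^ (t div N))"
    unfolding x_def N_def by (intro sum_mono uu_bound)
  also have "\<dots> \<le> (\<Sum>t<m * N. x ^ (t div N))"
    using N x by (intro sum_mono2) auto
  also have "\<dots> = real N * (\<Sum>q<m. x ^ q)" by (rule sum_blocks[OF N])
  also have "(\<Sum>q<m. x ^ q) \<le> 1 / (1 - x)"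
    using x by (simp add: sum_gp_strict divide_right_mono)
  finally show "(\<Sum>t<m. uu j t i) \<le> real N * (1 / (1 - x))"
    using N by (simp add: mult_left_mono)
qed

lemma uu_lim: "(\<lambda>t. uu j t i) \<longlonglongrightarrow> 0"
  by (rule summable_LIMSEQ_zero[OF uu_summable])

end

context wgraph begin

abbreviation fh where "fh j t i \<equiv> first_hit_prob (transition_matrix Phi) i j t"
abbreviation HH where "HH j i \<equiv> hitting_time (transition_matrix Phi) i j"

lemma abel: "(\<Sum>t<Suc m. real t * fh j t i) = (\<Sum>s<m. uu j s i) - real m * uu j m i"
proof (induction m)
  case 0 then show ?case by simp
next
  case (Suc m)
  have "(\<Sum>t<Suc (Suc m). real t * fh j t i) = (\<Sum>t<Suc m. real t * fh j t i) + real (Suc m) * fh j (Suc m) i"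
    by simp
  also have "\<dots> = (\<Sum>s<Suc m. uu j s i) - real (Suc m) * uu j (Suc m) i"
    using Suc by (simp add: fh_uu algebra_simps)
  finally show ?case .
qed

lemma H_summable: "summable (\<lambda>t. real t * fh j t i)"
proof (rule summableI_nonneg_bounded)
  show "0 \<le> real t * fh j t i" for t using fh_nonneg by simp
  fix n
  show "(\<Sum>t<n. real t * fh j t i) \<le> suminf (\<lambda>t. uu j t i)"
  proof (cases n)
    case 0 then show ?thesis using uu_nonneg by (simp add: suminf_nonneg uu_summable)
  next
    case (Suc m)
    have "(\<Sum>t<n. real t * fh j t i) \<le> (\<Sum>s<m. uu j s i)"
      using Suc abel[where m=m and i=i and j=j] uu_nonneg[of j m i] by simp
    also have "\<dots> \<le> suminf (\<lambda>t. uu j t i)"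
      by (rule sum_le_suminf[OF uu_summable]) (auto simp: uu_nonneg)
    finally show ?thesis .
  qed
qed

lemma H_sums: "(\<lambda>t. real t * fh j t i) sums HH j i"
  unfolding hitting_time_def by (rule summable_sums[OF H_summable])

lemma fh_sums: "(\<lambda>t. fh j t i) sums 1"
proof -
  have "(\<lambda>s. uu j s i - uu j (Suc s) i) sums (uu j 0 i - 0)"
    by (rule telescope_sums'[OF uu_lim])
  then have "(\<lambda>s. fh j (Suc s) i) sums (uu j 0 i)" by (simp add: fh_uu)
  then have "(\<lambda>t. fh j t i) sums (uu j 0 i + fh j 0 i)" by (simp add: sums_Suc_iff)
  then show ?thesis by (cases "i = j") (simp_all add: uu_0 fh_0)
qed

lemma H_jj: "HH j j = 0"
proof -
  have "(\<lambda>t. real t * fh j t j) = (\<lambda>_. 0)"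
  proof
    fix t show "real t * fh j t j = 0" by (cases t) (simp_all add: fh_Suc)
  qed
  then show ?thesis unfolding hitting_time_def by simp
qed

lemma H_rec: assumes "i \<noteq> j" shows "HH j i = 1 + (\<Sum>l\<in>UNIV. p i l * HH j l)"
proof -
  have "(\<lambda>s. \<Sum>l\<in>UNIV. p i l * (real s * fh j s l + fh j s l)) sums (\<Sum>l\<in>UNIV. p i l * (HH j l + 1))"
    by (intro sums_sum sums_mult sums_add H_sums fh_sums)
  moreover have "(\<lambda>s. \<Sum>l\<in>UNIV. p i l * (real s * fh j s l + fh j s l)) = (\<lambda>s. real (Suc s) * fh j (Suc s) i)"
  proof
    fix s
    have e: "fh j (Suc s) i = (\<Sum>l\<in>UNIV. p i l * fh j s l)" using assms by (simp add: fh_Suc P_entry)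
    have "(\<Sum>l\<in>UNIV. p i l * (real s * fh j s l + fh j s l)) = (\<Sum>l\<in>UNIV. (real s + 1) * (p i l * fh j s l))"
      by (intro sum.cong refl) (simp add: algebra_simps)
    also have "\<dots> = (real s + 1) * (\<Sum>l\<in>UNIV. p i l * fh j s l)" by (simp only: sum_distrib_left)
    finally show "(\<Sum>l\<in>UNIV. p i l * (real s * fh j s l + fh j s l)) = real (Suc s) * fh j (Suc s) i"
      using e by simp
  qed
  ultimately have "(\<lambda>s. real (Suc s) * fh j (Suc s) i) sums (\<Sum>l\<in>UNIV. p i l * (HH j l + 1))" by simp
  then have "(\<lambda>t. real t * fh j t i) sums ((\<Sum>l\<in>UNIV. p i l * (HH j l + 1)) + 0)"
    using sums_Suc_iff[of "\<lambda>t. real t * fh j t i"] by simp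
  then have "HH j i = (\<Sum>l\<in>UNIV. p i l * (HH j l + 1))"
    using sums_unique2[OF H_sums[where i=i and j=j]] by simp
  also have "\<dots> = 1 + (\<Sum>l\<in>UNIV. p i l * HH j l)"
    by (simp add: distrib_left sum.distrib p_rowsum)
  finally show ?thesis .
qed

definition dv :: "real^'n" where "dv = (\<chi> i. deg Phi i)"
definition cv :: "'n \<Rightarrow> real^'n" where
  "cv j = G *v (dv - vol Phi *\<^sub>R axis j 1) - vec ((G *v (dv - vol Phi *\<^sub>R axis j 1)) $ j)"

lemma vol_eq: "vol Phi = (\<Sum>i\<in>UNIV. deg Phi i)"
  by (simp add: vol_def trace_def degree_matrix_def deg_def)

lemma L_vec: "laplacian Phi *v vec c = 0"
  by (simp add: vec_eq_iff lap_mult)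

lemma L_cv: "laplacian Phi *v cv j = dv - vol Phi *\<^sub>R axis j 1"
proof -
  define w where "w = dv - vol Phi *\<^sub>R axis j 1"
  have ax: "(\<Sum>l\<in>UNIV. (axis j (1::real))$l) = 1" by (simp add: axis_def)
  have sw: "(\<Sum>l\<in>UNIV. w$l) = 0"
    by (simp add: w_def dv_def vol_eq sum_subtractf sum_distrib_left[symmetric] ax)
  have "laplacian Phi *v cv j = laplacian Phi *v (G *v w) - laplacian Phi *v vec ((G *v w) $ j)"
    by (simp add: cv_def w_def matrix_vector_mult_diff_distrib)
  also have "\<dots> = (mat 1 - Jn) *v w" by (simp add: L_vec matrix_vector_mul_assoc LG)
  also have "\<dots> = w" using sw by (simp add: matrix_vector_mult_diff_rdistrib vec_eq_iff Jn_vec)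
  finally show ?thesis by (simp add: w_def)
qed

lemma cv_j: "cv j $ j = 0" by (simp add: cv_def)

lemma cv_rec: assumes "i \<noteq> j" shows "cv j $ i = 1 + (\<Sum>l\<in>UNIV. p i l * cv j $ l)"
proof -
  have "deg Phi i = (laplacian Phi *v cv j) $ i" using assms by (simp add: L_cv dv_def axis_def)
  also have "\<dots> = deg Phi i * cv j $ i - (\<Sum>l\<in>UNIV. Phi$i$l * cv j $ l)"
    by (simp add: lap_mult algebra_simps sum_subtractf deg_def sum_distrib_left)
  finally have "deg Phi i = deg Phi i * cv j $ i - (\<Sum>l\<in>UNIV. Phi$i$l * cv j $ l)" .
  then have "1 = cv j $ i - (\<Sum>l\<in>UNIV. Phi$i$l * cv j $ l) / deg Phi i"
    using deg_pos[of i] by (simp add: field_simps)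
  then show ?thesis by (simp add: p_def sum_divide_distrib)
qed

lemma H_eq_cv: "HH j i = cv j $ i"
proof -
  define d where "d l = HH j l - cv j $ l" for l
  have Td: "Top j d = d"
  proof
    fix i show "Top j d i = d i"
    proof (cases "i = j")
      case True then show ?thesis by (simp add: Top_def d_def H_jj cv_j)
    next
      case False
      have "d i = (\<Sum>l\<in>UNIV. p i l * d l)" unfolding d_def
        using H_rec[OF False] cv_rec[OF False] by (simp add: algebra_simps sum_subtractf)
      then show ?thesis using False by (simp add: Top_def)
    qed
  qed
  have Tpow: "(Top j ^^ t) d = d" for t by (induction t) (simp_all add: Td)
  define B where "B = Max (range (\<lambda>l. \<bar>d l\<bar>))"
  have Bd: "\<bar>d l\<bar> \<le> B * uu j 0 l" for l
  proof (cases "l = j")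
    case True then show ?thesis by (simp add: d_def H_jj cv_j uu_0)
  next
    case False then show ?thesis unfolding B_def by (simp add: uu_0)
  qed
  have le: "\<bar>d i\<bar> \<le> B * uu j t i" for t
    using contract[of d B j t i, OF Bd] by (simp add: Tpow)
  have "(\<lambda>t. B * uu j t i) \<longlonglongrightarrow> B * 0" by (intro tendsto_mult tendsto_const uu_lim)
  then have "\<bar>d i\<bar> \<le> 0" using le by (intro LIMSEQ_le_const[of "\<lambda>t. B * uu j t i"]) auto
  then show ?thesis by (simp add: d_def)
qed

lemma mv_axis: "((A::real^'n^'n) *v axis j 1) $ i = A$i$j"
proof -
  have "(A *v axis j 1) $ i = (\<Sum>l\<in>UNIV. if l = j then A$i$l else 0)"
    by (simp add: matrix_vector_mult_def axis_def if_distrib[of "\<lambda>x. _ * x"] cong: if_cong)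
  then show ?thesis by simp
qed

lemma H_formula: "HH j i = (G *v dv)$i - vol Phi * G$i$j - (G *v dv)$j + vol Phi * G$j$j"
  by (simp add: H_eq_cv cv_def matrix_vector_mult_diff_distrib matrix_vector_mult_scaleR mv_axis)

lemma commute_formula:
  "commute_time_matrix Phi $ i $ j = vol Phi * (G$i$i + G$j$j - 2 * G$i$j)"
  using G_sym'[of i j] by (simp add: commute_time_matrix_def H_formula algebra_simps)

end

context wgraph begin

definition R where "R = {(a, b). Phi$a$b > 0 \<and> to_nat a < to_nat b}"
definition Eset where "Eset = {{j, k} | j k. Phi$j$k > 0}"

lemma pos_neq: "Phi$a$b > 0 \<Longrightarrow> a \<noteq> b" using diag0 by auto

lemma card_R: "card R = card Eset"
proof (rule bij_betw_same_card)
  show "bij_betw (\<lambda>(a, b). {a, b}) R Eset"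
    unfolding bij_betw_def
  proof
    show "inj_on (\<lambda>(a, b). {a, b}) R"
      unfolding inj_on_def R_def by (auto simp: doubleton_eq_iff)
    show "(\<lambda>(a, b). {a, b}) ` R = Eset"
    proof
      show "(\<lambda>(a, b). {a, b}) ` R \<subseteq> Eset" unfolding R_def Eset_def by auto
      show "Eset \<subseteq> (\<lambda>(a, b). {a, b}) ` R"
      proof
        fix x assume "x \<in> Eset"
        then obtain j k where x: "x = {j, k}" and jk: "Phi$j$k > 0" unfolding Eset_def by auto
        have "j \<noteq> k" using pos_neq[OF jk] .
        then have "to_nat j \<noteq> to_nat k" by (metis inj_to_nat injD)
        then consider "to_nat j < to_nat k" | "to_nat k < to_nat j" by linarith
        then show "x \<in> (\<lambda>(a, b). {a, b}) ` R"
        proof cases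
          case 1 then show ?thesis using x jk unfolding R_def by (auto intro!: image_eqI[where x="(j,k)"])
        next
          case 2
          have "Phi$k$j > 0" using jk sym[of k j] by simp
          then show ?thesis using x 2 unfolding R_def by (auto intro!: image_eqI[where x="(k,j)"])
        qed
      qed
    qed
  qed
qed

lemma orient:
  fixes \<epsilon> :: "'e::finite \<Rightarrow> 'n \<times> 'n"
  assumes "bij_betw \<epsilon> UNIV R"
  shows "edge_orientation Phi \<epsilon>"
proof -
  have inj: "inj \<epsilon>" using assms bij_betw_imp_inj_on by blast
  have rng: "range \<epsilon> = R" using assms bij_betw_imp_surj_on by blast
  show ?thesis unfolding edge_orientation_def
  proof (intro conjI allI impI inj)
    fix e
    have "\<epsilon> e \<in> R" using rng by auto
    then show "Phi $ fst (\<epsilon> e) $ snd (\<epsilon> e) > 0"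
      unfolding R_def by (cases "\<epsilon> e") auto
  next
    fix j k assume jk: "Phi$j$k > 0"
    have "to_nat j \<noteq> to_nat k" using pos_neq[OF jk] by (metis inj_to_nat injD)
    then have "to_nat j < to_nat k \<or> to_nat k < to_nat j" by linarith
    moreover have "Phi$k$j > 0" using jk sym[of k j] by simp
    ultimately show "(j, k) \<in> range \<epsilon> \<or> (k, j) \<in> range \<epsilon>"
      using jk unfolding rng R_def by auto
  next
    fix j k assume "(j, k) \<in> range \<epsilon>"
    then show "(k, j) \<notin> range \<epsilon>" unfolding rng R_def by auto
  qed
qed

definition ind :: "'n \<Rightarrow> 'n \<Rightarrow> real" where "ind a u = (if a = u then 1 else 0)"

lemma inc_entry:
  fixes \<epsilon> :: "'e::finite \<Rightarrow> 'n \<times> 'n"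
  assumes "bij_betw \<epsilon> UNIV R" "\<epsilon> e = (u, w)"
  shows "incidence_matrix Phi \<epsilon> $ a $ e = sqrt (Phi$u$w) * (ind a u - ind a w)"
proof -
  have rng: "range \<epsilon> = R" using assms(1) bij_betw_imp_surj_on by blast
  have "(u, w) \<in> R" using assms(2) rangeI[of \<epsilon> e] unfolding rng by simp
  then have "u \<noteq> w" unfolding R_def by auto
  then show ?thesis using assms(2) by (auto simp: incidence_matrix_def ind_def)
qed

lemma s1: "(\<Sum>u\<in>UNIV. \<Sum>w\<in>UNIV. Phi$u$w * ind a u * ind b u) = ind a b * deg Phi a"
proof -
  have "(\<Sum>u\<in>UNIV. \<Sum>w\<in>UNIV. Phi$u$w * ind a u * ind b u) = (\<Sum>u\<in>UNIV. ind a u * ind b u * deg Phi u)"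
    by (intro sum.cong refl) (simp add: deg_def sum_distrib_left sum_distrib_right algebra_simps)
  also have "\<dots> = (\<Sum>u\<in>UNIV. if u = a then ind b a * deg Phi a else 0)"
    by (intro sum.cong refl) (simp add: ind_def)
  also have "\<dots> = ind a b * deg Phi a" by (simp add: ind_def)
  finally show ?thesis .
qed

lemma s2: "(\<Sum>u\<in>UNIV. \<Sum>w\<in>UNIV. Phi$u$w * ind a u * ind b w) = Phi$a$b"
proof -
  have "(\<Sum>u\<in>UNIV. \<Sum>w\<in>UNIV. Phi$u$w * ind a u * ind b w) = (\<Sum>u\<in>UNIV. ind a u * Phi$u$b)"
  proof (intro sum.cong refl)
    fix u
    have "(\<Sum>w\<in>UNIV. Phi$u$w * ind a u * ind b w) = (\<Sum>w\<in>UNIV. if w = b then Phi$u$w * ind a u else 0)"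
      by (intro sum.cong refl) (simp add: ind_def)
    then show "(\<Sum>w\<in>UNIV. Phi$u$w * ind a u * ind b w) = ind a u * Phi$u$b" by simp
  qed
  also have "\<dots> = (\<Sum>u\<in>UNIV. if u = a then Phi$u$b else 0)"
    by (intro sum.cong refl) (simp add: ind_def)
  finally show ?thesis by simp
qed

lemma sum_all_pairs:
  "(\<Sum>(u,w)\<in>UNIV. Phi$u$w * (ind a u - ind a w) * (ind b u - ind b w)) = 2 * laplacian Phi $ a $ b"
proof -
  have "(\<Sum>(u,w)\<in>UNIV. Phi$u$w * (ind a u - ind a w) * (ind b u - ind b w))
    = (\<Sum>u\<in>UNIV. \<Sum>w\<in>UNIV. Phi$u$w * (ind a u - ind a w) * (ind b u - ind b w))"
    unfolding UNIV_Times_UNIV[symmetric] by (rule sum.cartesian_product[symmetric])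
  also have "\<dots> = (\<Sum>u\<in>UNIV. \<Sum>w\<in>UNIV. Phi$u$w * ind a u * ind b u) - (\<Sum>u\<in>UNIV. \<Sum>w\<in>UNIV. Phi$u$w * ind a u * ind b w)
     - (\<Sum>u\<in>UNIV. \<Sum>w\<in>UNIV. Phi$w$u * ind a u * ind b w) + (\<Sum>u\<in>UNIV. \<Sum>w\<in>UNIV. Phi$w$u * ind a u * ind b u)"
  proof -
    have e: "Phi$u$w * (ind a u - ind a w) * (ind b u - ind b w) =
      Phi$u$w * ind a u * ind b u - Phi$u$w * ind a u * ind b w - Phi$u$w * ind a w * ind b u + Phi$u$w * ind a w * ind b w" for u w
      by (simp add: algebra_simps)
    have sw1: "(\<Sum>u\<in>UNIV. \<Sum>w\<in>UNIV. Phi$u$w * ind a w * ind b u) = (\<Sum>u\<in>UNIV. \<Sum>w\<in>UNIV. Phi$w$u * ind a u * ind b w)"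
      by (rule sum.swap)
    have sw2: "(\<Sum>u\<in>UNIV. \<Sum>w\<in>UNIV. Phi$u$w * ind a w * ind b w) = (\<Sum>u\<in>UNIV. \<Sum>w\<in>UNIV. Phi$w$u * ind a u * ind b u)"
      by (rule sum.swap)
    show ?thesis unfolding e sum.distrib sum_subtractf sw1 sw2 by simp
  qed
  also have "(\<Sum>u\<in>UNIV. \<Sum>w\<in>UNIV. Phi$w$u * ind a u * ind b w) = Phi$a$b"
    using s2[of a b] sym by simp
  also have "(\<Sum>u\<in>UNIV. \<Sum>w\<in>UNIV. Phi$w$u * ind a u * ind b u) = ind a b * deg Phi a"
    using s1[of a b] sym by simp
  finally show ?thesis using s1[of a b] s2[of a b] by (simp add: lap ind_def)
qed

end

context wgraph begin

lemma FFt: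
  fixes \<epsilon> :: "'e::finite \<Rightarrow> 'n \<times> 'n"
  assumes bij: "bij_betw \<epsilon> UNIV R"
  shows "incidence_matrix Phi \<epsilon> ** transpose (incidence_matrix Phi \<epsilon>) = laplacian Phi"
proof -
  have "(incidence_matrix Phi \<epsilon> ** transpose (incidence_matrix Phi \<epsilon>)) $ a $ b = laplacian Phi $ a $ b" for a b
  proof -
    define h where "h = (\<lambda>(u,w). Phi$u$w * (ind a u - ind a w) * (ind b u - ind b w))"
    have "(incidence_matrix Phi \<epsilon> ** transpose (incidence_matrix Phi \<epsilon>)) $ a $ b
        = (\<Sum>e\<in>UNIV. incidence_matrix Phi \<epsilon> $ a $ e * incidence_matrix Phi \<epsilon> $ b $ e)"
      by (simp add: matrix_matrix_mult_def transpose_def)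
    also have "\<dots> = (\<Sum>e\<in>UNIV. h (\<epsilon> e))"
    proof (intro sum.cong refl)
      fix e
      obtain u w where uw: "\<epsilon> e = (u, w)" by (cases "\<epsilon> e")
      have "sqrt (Phi$u$w) * sqrt (Phi$u$w) = Phi$u$w" using nonneg by simp
      then show "incidence_matrix Phi \<epsilon> $ a $ e * incidence_matrix Phi \<epsilon> $ b $ e = h (\<epsilon> e)"
        unfolding inc_entry[OF bij uw] uw h_def by (simp add: algebra_simps)
    qed
    also have "\<dots> = sum h R" by (rule sum.reindex_bij_betw[OF bij])
    finally have 1: "(incidence_matrix Phi \<epsilon> ** transpose (incidence_matrix Phi \<epsilon>)) $ a $ b = sum h R" .
    define sw where "sw = (\<lambda>(u::'n, w::'n). (w, u))"
    have hsw: "h (sw x) = h x" for x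
      unfolding h_def sw_def using sym by (cases x) (simp add: algebra_simps)
    have injsw: "inj_on sw R" unfolding sw_def inj_on_def by auto
    have "sum h (sw ` R) = sum (h \<circ> sw) R" by (rule sum.reindex[OF injsw])
    also have "\<dots> = sum h R" by (simp add: hsw comp_def)
    finally have 2: "sum h (sw ` R) = sum h R" .
    have disj: "R \<inter> sw ` R = {}" unfolding R_def sw_def by auto
    have un: "R \<union> sw ` R = {(u, w). Phi$u$w > 0}"
    proof
      show "R \<union> sw ` R \<subseteq> {(u, w). Phi$u$w > 0}"
        unfolding R_def sw_def using sym by auto
      show "{(u, w). Phi$u$w > 0} \<subseteq> R \<union> sw ` R"
      proof
        fix x assume "x \<in> {(u, w). Phi$u$w > 0}"
        then obtain u w where x: "x = (u, w)" and pos: "Phi$u$w > 0" by auto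
        have "to_nat u \<noteq> to_nat w" using pos_neq[OF pos] by (metis inj_to_nat injD)
        then have "to_nat u < to_nat w \<or> to_nat w < to_nat u" by linarith
        moreover have "Phi$w$u > 0" using pos sym[of w u] by simp
        ultimately show "x \<in> R \<union> sw ` R" unfolding x R_def sw_def
          using pos by (auto intro: image_eqI[where x="(w,u)"])
      qed
    qed
    have "sum h R + sum h (sw ` R) = sum h {(u, w). Phi$u$w > 0}"
      unfolding un[symmetric] by (rule sum.union_disjoint[symmetric]) (auto simp: disj)
    also have "\<dots> = sum h UNIV"
    proof (rule sum.mono_neutral_left)
      show "\<forall>x\<in>UNIV - {(u, w). Phi$u$w > 0}. h x = 0"
      proof
        fix x assume "x \<in> UNIV - {(u, w). Phi$u$w > 0}"
        then have "Phi $ fst x $ snd x = 0" using nonneg[of "fst x" "snd x"] by (cases x) auto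
        then show "h x = 0" unfolding h_def by (cases x) auto
      qed
    qed auto
    also have "\<dots> = 2 * laplacian Phi $ a $ b" unfolding h_def by (rule sum_all_pairs)
    finally show ?thesis using 1 2 by simp
  qed
  then show ?thesis by (simp add: vec_eq_iff)
qed

lemma Jn_F:
  fixes \<epsilon> :: "'e::finite \<Rightarrow> 'n \<times> 'n"
  assumes bij: "bij_betw \<epsilon> UNIV R"
  shows "Jn ** incidence_matrix Phi \<epsilon> = 0"
proof -
  have "(Jn ** incidence_matrix Phi \<epsilon>) $ a $ e = 0" for a e
  proof -
    obtain u w where uw: "\<epsilon> e = (u, w)" by (cases "\<epsilon> e")
    have s: "(\<Sum>l\<in>UNIV. ind l u - ind l w) = 0" by (simp add: sum_subtractf ind_def)
    have "(Jn ** incidence_matrix Phi \<epsilon>) $ a $ e = (\<Sum>l\<in>UNIV. (sqrt (Phi$u$w) / real CARD('n)) * (ind l u - ind l w))"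
      by (simp add: matrix_matrix_mult_def Jn_def inc_entry[OF bij uw])
    also have "\<dots> = 0" by (simp only: sum_distrib_left[symmetric] s mult_zero_right)
    finally show ?thesis .
  qed
  then show ?thesis by (simp add: vec_eq_iff)
qed

lemma pinv_F:
  fixes \<epsilon> :: "'e::finite \<Rightarrow> 'n \<times> 'n"
  assumes bij: "bij_betw \<epsilon> UNIV R"
  shows "pinv (incidence_matrix Phi \<epsilon>) = transpose (incidence_matrix Phi \<epsilon>) ** G"
proof (rule pinv_eq)
  define F where "F = incidence_matrix Phi \<epsilon>"
  have FF: "F ** transpose F = laplacian Phi" unfolding F_def by (rule FFt[OF bij])
  have JF: "Jn ** F = 0" unfolding F_def by (rule Jn_F[OF bij])
  have GLG: "G ** laplacian Phi ** G = G" using pinv_L unfolding is_pinv_def by simp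
  have FX: "F ** (transpose F ** G) = mat 1 - Jn" by (simp add: matrix_mul_assoc FF LG)
  have "F ** (transpose F ** G) ** F = F" unfolding FX by (simp add: mm_diff_r JF)
  moreover have "transpose F ** G ** F ** (transpose F ** G) = transpose F ** G"
  proof -
    have "transpose F ** G ** F ** (transpose F ** G) = transpose F ** (G ** (F ** transpose F) ** G)"
      by (simp add: matrix_mul_assoc)
    also have "\<dots> = transpose F ** G" by (simp add: FF GLG)
    finally show ?thesis .
  qed
  moreover have "transpose (F ** (transpose F ** G)) = F ** (transpose F ** G)"
    unfolding FX by (simp add: transpose_diff transpose_Jn)
  moreover have "transpose (transpose F ** G ** F) = transpose F ** G ** F"
    by (simp add: matrix_transpose_mul G_sym matrix_mul_assoc)
  ultimately show "is_pinv (incidence_matrix Phi \<epsilon>) (transpose (incidence_matrix Phi \<epsilon>) ** G)"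
    unfolding is_pinv_def F_def by simp
qed

lemma vol_pos: "vol Phi > 0"
  unfolding vol_eq by (rule sum_pos) (auto simp: deg_pos)

end

lemma centered:
  fixes Phi :: "real^'n^'n"
  assumes "wgraph Phi"
  shows "((mat 1 - (\<chi> a b. 1 / real CARD('n))) *v (column k (commute_time_matrix Phi) - column j (commute_time_matrix Phi))) $ i
     = vol Phi * (2 * wgraph.G Phi $ i $ j - 2 * wgraph.G Phi $ i $ k)"
proof -
  interpret wgraph Phi by (rule assms)
  define v where "v = column k (commute_time_matrix Phi) - column j (commute_time_matrix Phi)"
  have v: "v $ l = vol Phi * (G$k$k - G$j$j - 2 * G$l$k + 2 * G$l$j)" for l
    by (simp add: v_def column_def commute_formula algebra_simps)
  have "(\<Sum>l\<in>UNIV. v $ l) = (\<Sum>l\<in>UNIV. vol Phi * (G$k$k - G$j$j) - 2 * vol Phi * G$l$k + 2 * vol Phi * G$l$j)"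
    by (simp add: v algebra_simps)
  also have "\<dots> = real CARD('n) * (vol Phi * (G$k$k - G$j$j)) - 2 * vol Phi * (\<Sum>l\<in>UNIV. G$l$k) + 2 * vol Phi * (\<Sum>l\<in>UNIV. G$l$j)"
    by (simp add: sum.distrib sum_subtractf sum_distrib_left)
  also have "\<dots> = real CARD('n) * (vol Phi * (G$k$k - G$j$j))" by (simp add: G_col_sum)
  finally have sv: "(\<Sum>l\<in>UNIV. v $ l) = real CARD('n) * (vol Phi * (G$k$k - G$j$j))" .
  define S where "S = (\<Sum>l\<in>UNIV. v$l)"
  have "((mat 1 - (\<chi> a b. 1 / real CARD('n))) *v v) $ i = v $ i - S / real CARD('n)"
    unfolding S_def by (simp add: Jn_def[symmetric] matrix_vector_mult_diff_rdistrib Jn_vec)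
  also have "S / real CARD('n) = vol Phi * (G$k$k - G$j$j)" unfolding S_def sv by simp
  also have "v $ i - vol Phi * (G$k$k - G$j$j) = vol Phi * (2 * G $ i $ j - 2 * G $ i $ k)"
    unfolding v by (simp add: algebra_simps)
  finally show ?thesis by (simp add: v_def)
qed

lemma sum_ind1: fixes j :: "'a::finite" shows "(\<Sum>l\<in>UNIV. (if l = j then 1 else 0) * f l) = (f j :: real)"
proof -
  have "(\<Sum>l\<in>UNIV. (if l = j then 1 else 0) * f l) = (\<Sum>l\<in>UNIV. if l = j then f l else 0)"
    by (intro sum.cong refl) auto
  then show ?thesis by simp
qed

theorem lemma3p1:
  fixes Phi :: "real^'n^'n"
  assumes "weighted_graph Phi"
    and "connected_graph Phi"
    and "CARD('e::finite) = card {{j, k} | j k. Phi$j$k > 0}"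
  shows "\<exists>(\<epsilon> :: 'e \<Rightarrow> 'n \<times> 'n) F. edge_orientation Phi \<epsilon> \<and> F = incidence_matrix Phi \<epsilon> \<and>
    (\<forall>e j k. \<epsilon> e = (j, k) \<longrightarrow>
       (pinv F) $ e = sqrt (Phi$j$k) *\<^sub>R (column j (pinv (laplacian Phi)) - column k (pinv (laplacian Phi)))
     \<and> sqrt (Phi$j$k) *\<^sub>R (column j (pinv (laplacian Phi)) - column k (pinv (laplacian Phi)))
       = (sqrt (Phi$j$k) / (2 * vol Phi)) *\<^sub>R
           ((mat 1 - (\<chi> a b. 1 / real CARD('n))) *v
              (column k (commute_time_matrix Phi) - column j (commute_time_matrix Phi))))"
proof -
  have "CARD('e) > 0" by simp
  then have "{{j, k} | j k. Phi$j$k > 0} \<noteq> {}" using assms(3) by (metis card.empty less_irrefl)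
  then obtain a b where ab: "Phi$a$b > 0" by blast
  have "a \<noteq> b" using ab assms(1) unfolding weighted_graph_def by auto
  then interpret wgraph Phi using assms(1,2) by unfold_locales blast+
  have "card (UNIV :: 'e set) = card R" using assms(3) card_R unfolding Eset_def by simp
  then obtain \<epsilon> :: "'e \<Rightarrow> 'n \<times> 'n" where bij: "bij_betw \<epsilon> UNIV R"
    using finite_same_card_bij[of "UNIV :: 'e set" R] by auto
  have pL: "pinv (laplacian Phi) = G" by (rule pinv_eq[OF pinv_L])
  have pF: "pinv (incidence_matrix Phi \<epsilon>) = transpose (incidence_matrix Phi \<epsilon>) ** G"
    by (rule pinv_F[OF bij])
  show ?thesis
  proof (intro exI conjI allI impI)
    show "edge_orientation Phi \<epsilon>" by (rule orient[OF bij])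
    show "incidence_matrix Phi \<epsilon> = incidence_matrix Phi \<epsilon>" ..
  next
    fix e j k assume ejk: "\<epsilon> e = (j, k)"
    show "pinv (incidence_matrix Phi \<epsilon>) $ e =
        sqrt (Phi$j$k) *\<^sub>R (column j (pinv (laplacian Phi)) - column k (pinv (laplacian Phi)))"
    proof -
      have "(transpose (incidence_matrix Phi \<epsilon>) ** G) $ e $ i = sqrt (Phi$j$k) * (G$i$j - G$i$k)" for i
      proof -
        have "(transpose (incidence_matrix Phi \<epsilon>) ** G) $ e $ i = (\<Sum>l\<in>UNIV. sqrt (Phi$j$k) * (ind l j * G$l$i - ind l k * G$l$i))"
          by (simp add: matrix_matrix_mult_def transpose_def inc_entry[OF bij ejk] algebra_simps)
        also have "\<dots> = sqrt (Phi$j$k) * (G$j$i - G$k$i)"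
          by (simp add: sum_distrib_left[symmetric] sum_subtractf ind_def sum_ind1)
        finally show ?thesis using G_sym'[of i j] G_sym'[of i k] by simp
      qed
      then show ?thesis by (simp add: pF pL vec_eq_iff column_def)
    qed
    show "sqrt (Phi$j$k) *\<^sub>R (column j (pinv (laplacian Phi)) - column k (pinv (laplacian Phi)))
       = (sqrt (Phi$j$k) / (2 * vol Phi)) *\<^sub>R
           ((mat 1 - (\<chi> a b. 1 / real CARD('n))) *v
              (column k (commute_time_matrix Phi) - column j (commute_time_matrix Phi)))"
    proof -
      have "sqrt (Phi$j$k) * (G$i$j - G$i$k) = sqrt (Phi$j$k) / (2 * vol Phi) * (vol Phi * (2 * G $ i $ j - 2 * G $ i $ k))" for i
        using vol_pos by (simp add: field_simps)
      then show ?thesis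
        using centered[OF wgraph_axioms] by (simp add: pL vec_eq_iff column_def)
    qed
  qed
qed

end
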